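(* Let $X$ be a real Banach space, $Y$ a (closed linear) subspace of $X$, $F=\{x_1,\dots,x_N\}$ a finite subset of $X$, $f:[0,\infty)^N\to[0,\infty)$ a monotone function, and $\varepsilon>0$. Then: (a) $\mathrm{rad}_Y^f(F)=\inf\{r_f(y,F): y\in\bigcup_{i=1}^N B[x_i,\mathrm{rad}_Y(F)+\varepsilon]\cap Y\}=\inf\{r_f(y,F): y\in Y,\ \|y\|\le\max_{1\le i\le N}\|x_i\|+\mathrm{rad}_Y(F)+\varepsilon\}$; (b) if $f$ is weakly strictly monotone, then $\mathrm{Cent}_Y^f(F)\subseteq\bigcup_{i=1}^N B[x_i,\mathrm{rad}_Y(F)+\varepsilon]\cap Y$; (c) if $f$ is weakly strictly monotone, then $\mathrm{Cent}_Y^f(F)\subseteq\bigcap_{i=1}^N B[x_i,\mathrm{rad}_Y(F)+\mathrm{diam}(F)+\varepsilon]\cap Y$.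
   Context: $B[x,r]$ is the closed ball with center $x$ and radius $r$. $f$ is monotone if $a\le b$ coordinatewise implies $f(a)\le f(b)$, weakly strictly monotone if monotone and $a_i<b_i$ for all $i$ implies $f(a)<f(b)$. $r_f(x,F)=f(\|x-x_1\|,\dots,\|x-x_N\|)$, $\mathrm{rad}_Y^f(F)=\inf_{y\in Y}r_f(y,F)$, $\mathrm{Cent}_Y^f(F)=\{y\in Y:r_f(y,F)=\mathrm{rad}_Y^f(F)\}$, and $\mathrm{rad}_Y(F)=\inf_{y\in Y}\max_{1\le i\le N}\|y-x_i\|$ is the restricted Chebyshev radius. *)

theory Defs
  imports "HOL-Analysis.Analysis"
begin

text \<open>The finite family F = {x_1,...,x_N} is given as a nonempty list xs of length N;
  f : [0,oo)^N -> [0,oo) is a function on real lists, only its behaviour on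
  nonnegative lists of length N matters.\<close>

definition nonneg_vec :: "nat \<Rightarrow> real list \<Rightarrow> bool" where
  "nonneg_vec N a \<longleftrightarrow> length a = N \<and> (\<forall>i<N. 0 \<le> a ! i)"

definition maps_nonneg :: "nat \<Rightarrow> (real list \<Rightarrow> real) \<Rightarrow> bool" where
  "maps_nonneg N f \<longleftrightarrow> (\<forall>a. nonneg_vec N a \<longrightarrow> 0 \<le> f a)"

definition monotone_fn :: "nat \<Rightarrow> (real list \<Rightarrow> real) \<Rightarrow> bool" where
  "monotone_fn N f \<longleftrightarrow> (\<forall>a b. nonneg_vec N a \<and> nonneg_vec N b \<and> (\<forall>i<N. a ! i \<le> b ! i)
      \<longrightarrow> f a \<le> f b)"

definition weakly_strictly_monotone_fn :: "nat \<Rightarrow> (real list \<Rightarrow> real) \<Rightarrow> bool" where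
  "weakly_strictly_monotone_fn N f \<longleftrightarrow> monotone_fn N f \<and>
     (\<forall>a b. nonneg_vec N a \<and> nonneg_vec N b \<and> (\<forall>i<N. a ! i < b ! i) \<longrightarrow> f a < f b)"

definition r_f :: "(real list \<Rightarrow> real) \<Rightarrow> 'a::real_normed_vector \<Rightarrow> 'a list \<Rightarrow> real" where
  "r_f f x xs = f (map (\<lambda>xi. norm (x - xi)) xs)"

definition rad_f :: "(real list \<Rightarrow> real) \<Rightarrow> 'a::real_normed_vector set \<Rightarrow> 'a list \<Rightarrow> real" where
  "rad_f f Y xs = (INF y\<in>Y. r_f f y xs)"

definition Cent_f :: "(real list \<Rightarrow> real) \<Rightarrow> 'a::real_normed_vector set \<Rightarrow> 'a list \<Rightarrow> 'a set" where
  "Cent_f f Y xs = {y \<in> Y. r_f f y xs = rad_f f Y xs}"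

definition cheb_rad :: "'a::real_normed_vector set \<Rightarrow> 'a list \<Rightarrow> real" where
  "cheb_rad Y xs = (INF y\<in>Y. Max ((\<lambda>xi. norm (y - xi)) ` set xs))"

end

theory Submission
  imports Defs
begin

lemma nn_map: "nonneg_vec (length xs) (map (\<lambda>xi. norm (y - xi)) xs)"
  by (simp add: nonneg_vec_def)

lemma r_f_nonneg:
  assumes "maps_nonneg (length xs) f"
  shows "0 \<le> r_f f y xs"
  using assms nn_map unfolding maps_nonneg_def r_f_def by blast

lemma r_f_mono:
  assumes "monotone_fn (length xs) f" "\<And>x. x \<in> set xs \<Longrightarrow> norm (a - x) \<le> norm (b - x)"
  shows "r_f f a xs \<le> r_f f b xs"
  using assms(1) nn_map[of xs a] nn_map[of xs b] assms(2)
  unfolding monotone_fn_def r_f_def by (simp add: nth_mem)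

lemma r_f_smono:
  assumes "weakly_strictly_monotone_fn (length xs) f" "\<And>x. x \<in> set xs \<Longrightarrow> norm (a - x) < norm (b - x)"
  shows "r_f f a xs < r_f f b xs"
  using assms(1) nn_map[of xs a] nn_map[of xs b] assms(2)
  unfolding weakly_strictly_monotone_fn_def r_f_def by (simp add: nth_mem)

theorem proposition4p2:
  fixes Y :: "'a::banach set" and xs :: "'a list" and f :: "real list \<Rightarrow> real" and \<epsilon> :: real
  assumes "subspace Y" and "closed Y"
    and "xs \<noteq> []"
    and "maps_nonneg (length xs) f"
    and "monotone_fn (length xs) f"
    and "\<epsilon> > 0"
  shows "rad_f f Y xs = (INF y\<in>(\<Union>x\<in>set xs. cball x (cheb_rad Y xs + \<epsilon>)) \<inter> Y. r_f f y xs)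
       \<and> (INF y\<in>(\<Union>x\<in>set xs. cball x (cheb_rad Y xs + \<epsilon>)) \<inter> Y. r_f f y xs)
         = (INF y\<in>{y \<in> Y. norm y \<le> Max (norm ` set xs) + cheb_rad Y xs + \<epsilon>}. r_f f y xs)
       \<and> (weakly_strictly_monotone_fn (length xs) f \<longrightarrow>
           Cent_f f Y xs \<subseteq> (\<Union>x\<in>set xs. cball x (cheb_rad Y xs + \<epsilon>)) \<inter> Y)
       \<and> (weakly_strictly_monotone_fn (length xs) f \<longrightarrow>
           Cent_f f Y xs \<subseteq> (\<Inter>x\<in>set xs. cball x (cheb_rad Y xs + diameter (set xs) + \<epsilon>)) \<inter> Y)"
proof -
  define R where "R = cheb_rad Y xs"
  define A where "A = (\<Union>x\<in>set xs. cball x (R + \<epsilon>)) \<inter> Y"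
  define B where "B = {y \<in> Y. norm y \<le> Max (norm ` set xs) + R + \<epsilon>}"
  have Y0: "0 \<in> Y" using assms(1) by (simp add: subspace_0)
  have fin: "finite (set xs)" "set xs \<noteq> {}" using assms(3) by auto
  have "R < R + \<epsilon>" using assms(6) by simp
  then have "(INF y\<in>Y. Max ((\<lambda>xi. norm (y - xi)) ` set xs)) < R + \<epsilon>"
    unfolding R_def cheb_rad_def .
  then obtain y0 where y0: "y0 \<in> Y" "Max ((\<lambda>xi. norm (y0 - xi)) ` set xs) < R + \<epsilon>"
  proof -
    have "bdd_below ((\<lambda>y. Max ((\<lambda>xi. norm (y - xi)) ` set xs)) ` Y)"
    proof (rule bdd_belowI2[where m=0])
      fix y
      have "hd xs \<in> set xs" using assms(3) by simp
      then show "0 \<le> Max ((\<lambda>xi. norm (y - xi)) ` set xs)"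
        using fin by (meson Max_ge finite_imageI image_eqI norm_ge_zero order_trans)
    qed
    then have "\<exists>y\<in>Y. Max ((\<lambda>xi. norm (y - xi)) ` set xs) < R + \<epsilon>"
      using \<open>(INF y\<in>Y. Max ((\<lambda>xi. norm (y - xi)) ` set xs)) < R + \<epsilon>\<close>
      using Y0 by (subst (asm) cINF_less_iff) auto
    then show ?thesis using that by blast
  qed
  have y0d: "norm (y0 - x) < R + \<epsilon>" if "x \<in> set xs" for x
  proof -
    have "norm (y0 - x) \<le> Max ((\<lambda>xi. norm (y0 - xi)) ` set xs)" using that fin by simp
    then show ?thesis using y0(2) by linarith
  qed
  have y0A: "y0 \<in> A"
  proof -
    have h: "hd xs \<in> set xs" using assms(3) by simp
    then have "dist (hd xs) y0 \<le> R + \<epsilon>" using y0d[OF h] by (simp add: dist_norm norm_minus_commute)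
    then show ?thesis unfolding A_def using h y0(1) by auto
  qed
  have AB: "A \<subseteq> B"
  proof
    fix y assume "y \<in> A"
    then obtain x where x: "x \<in> set xs" "norm (x - y) \<le> R + \<epsilon>" "y \<in> Y"
      unfolding A_def by (auto simp: dist_norm)
    have "norm y = norm (x - (x - y))" by simp
    also have "\<dots> \<le> norm x + norm (x - y)" by (rule norm_triangle_ineq4)
    finally have "norm y \<le> norm x + norm (x - y)" .
    moreover have "norm x \<le> Max (norm ` set xs)" using x(1) fin by simp
    ultimately have "norm y \<le> Max (norm ` set xs) + R + \<epsilon>" using x(2) by linarith
    then show "y \<in> B" unfolding B_def using x(3) by blast
  qed
  have BY: "B \<subseteq> Y" unfolding B_def by auto
  have bdd: "bdd_below ((\<lambda>y. r_f f y xs) ` S)" for S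
    by (rule bdd_belowI2[where m=0]) (rule r_f_nonneg[OF assms(4)])
  have i1: "(INF y\<in>Y. r_f f y xs) \<le> (INF y\<in>B. r_f f y xs)"
    using AB y0A BY by (intro cINF_superset_mono bdd) auto
  have i2: "(INF y\<in>B. r_f f y xs) \<le> (INF y\<in>A. r_f f y xs)"
    using AB y0A by (intro cINF_superset_mono bdd) auto
  have i3: "(INF y\<in>A. r_f f y xs) \<le> (INF y\<in>Y. r_f f y xs)"
  proof (rule cINF_mono)
    show "Y \<noteq> {}" using Y0 by auto
    show "bdd_below ((\<lambda>y. r_f f y xs) ` A)" by (rule bdd)
    fix m assume m: "m \<in> Y"
    show "\<exists>n\<in>A. r_f f n xs \<le> r_f f m xs"
    proof (cases "m \<in> A")
      case True then show ?thesis by auto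
    next
      case False
      then have "\<forall>x\<in>set xs. norm (m - x) > R + \<epsilon>"
        using m unfolding A_def by (auto simp: dist_norm norm_minus_commute not_le)
      then have "r_f f y0 xs \<le> r_f f m xs"
        using y0d by (intro r_f_mono[OF assms(5)]) (meson less_imp_le order.strict_trans)
      then show ?thesis using y0A by auto
    qed
  qed
  have b: "Cent_f f Y xs \<subseteq> A" if ws: "weakly_strictly_monotone_fn (length xs) f"
  proof
    fix y assume "y \<in> Cent_f f Y xs"
    then have y: "y \<in> Y" "r_f f y xs = (INF y\<in>Y. r_f f y xs)"
      unfolding Cent_f_def rad_f_def by auto
    show "y \<in> A"
    proof (rule ccontr)
      assume "y \<notin> A"
      then have "\<forall>x\<in>set xs. norm (y - x) > R + \<epsilon>"
        using y unfolding A_def by (auto simp: dist_norm norm_minus_commute not_le)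
      then have "r_f f y0 xs < r_f f y xs"
        using y0d by (intro r_f_smono[OF ws]) (meson order.strict_trans)
      moreover have "(INF y\<in>Y. r_f f y xs) \<le> r_f f y0 xs"
        using y0(1) by (intro cINF_lower bdd) auto
      ultimately show False using y by simp
    qed
  qed
  have c: "Cent_f f Y xs \<subseteq> (\<Inter>x\<in>set xs. cball x (R + diameter (set xs) + \<epsilon>)) \<inter> Y"
    if ws: "weakly_strictly_monotone_fn (length xs) f"
  proof
    fix y assume yc: "y \<in> Cent_f f Y xs"
    then have yY: "y \<in> Y" unfolding Cent_f_def by auto
    from b[OF ws] yc obtain x where x: "x \<in> set xs" "dist x y \<le> R + \<epsilon>"
      unfolding A_def by auto
    have "dist z y \<le> R + diameter (set xs) + \<epsilon>" if z: "z \<in> set xs" for z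
    proof -
      have "dist z x \<le> diameter (set xs)"
        using z x(1) fin by (intro diameter_bounded_bound) (auto intro: finite_imp_bounded)
      moreover have "dist z y \<le> dist z x + dist x y" by (rule dist_triangle)
      ultimately show ?thesis using x(2) by linarith
    qed
    then show "y \<in> (\<Inter>x\<in>set xs. cball x (R + diameter (set xs) + \<epsilon>)) \<inter> Y"
      using yY by auto
  qed
  have e1: "rad_f f Y xs = (INF y\<in>A. r_f f y xs)"
    unfolding rad_f_def using i1 i2 i3 by linarith
  have e2: "(INF y\<in>A. r_f f y xs) = (INF y\<in>B. r_f f y xs)"
    using i1 i2 i3 by linarith
  show ?thesis
    using e1 e2 b c unfolding A_def B_def R_def by blast
qed

end
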